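(* Let $G$ be a graph, $m\geq 2$, and $\mathcal{H}=(L,H)$ an $m$-fold cover of $G$. Let $e=uv\in E(G)$ and $H'=H-E_H(L(u),L(v))$, so that $\mathcal{H}'=(L,H')$ is an $m$-fold cover of $G-\{e\}$. If there is a natural bijection between the $\mathcal{H}'$-colorings of $G-\{e\}$ and the proper $m$-colorings of $G-\{e\}$, then $$P_{DP}(G,\mathcal{H})\geq P(G-\{e\},m)-\max\left\{P(G-\{e\},m)-P(G,m),\ \frac{P(G,m)}{m-1}\right\}.$$ Moreover, there exists an $m$-fold cover $\mathcal{H}^*=(L,H^* )$ of $G$ with $$P_{DP}(G,\mathcal{H}^* )=P(G-\{e\},m)-\max\left\{P(G-\{e\},m)-P(G,m),\ \frac{P(G,m)}{m-1}\right\}.$$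
   Context: All graphs are finite and simple; $G-\{e\}$ is $G$ with edge $e$ deleted. $P(G,m)$ denotes the chromatic polynomial of $G$. A cover of a graph $G$ is a pair $\mathcal{H}=(L,H)$ where $H$ is a graph and $L:V(G)\to\mathcal{P}(V(H))$ satisfies: (1) the sets $L(u)$, $u\in V(G)$, partition $V(H)$; (2) for every $u$, $H[L(u)]$ is complete; (3) if $E_H(L(u),L(v))\neq\emptyset$ then $u=v$ or $uv\in E(G)$; (4) if $uv\in E(G)$ then $E_H(L(u),L(v))$ is a matching (possibly empty). Here $E_H(S,U)$ is the set of edges of $H$ between $S$ and $U$. The cover is $m$-fold if $|L(u)|=m$ for all $u$. An $\mathcal{H}$-coloring is an independent set of $H$ of size $|V(G)|$; $P_{DP}(G,\mathcal{H})$ is the number of $\mathcal{H}$-colorings. For an $m$-fold cover $\mathcal{H}=(L,H)$ of $G$, we say there is a natural bijection between the $\mathcal{H}$-colorings of $G$ and the proper $m$-colorings of $G$ if the elements of each $L(v)$ can be labeled $L(v)=\{(v,j):j\in[m]\}$ so that whenever $uv\in E(G)$, $(u,j)$ and $(v,j)$ are adjacent in $H$ for every $j\in[m]$. *)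

theory Defs
  imports Complex_Main "HOL-Library.FuncSet"
begin

definition simple_graph :: "'a set \<Rightarrow> 'a set set \<Rightarrow> bool" where
  "simple_graph V E \<longleftrightarrow> finite V \<and>
     E \<subseteq> {e. \<exists>x y. e = {x, y} \<and> x \<noteq> y \<and> x \<in> V \<and> y \<in> V}"

definition edges_between :: "'a set set \<Rightarrow> 'a set \<Rightarrow> 'a set \<Rightarrow> 'a set set" where
  "edges_between EH S U = {f \<in> EH. \<exists>a\<in>S. \<exists>b\<in>U. f = {a, b}}"

definition is_matching :: "'a set set \<Rightarrow> bool" where
  "is_matching M \<longleftrightarrow> (\<forall>f\<in>M. \<forall>g\<in>M. f \<noteq> g \<longrightarrow> f \<inter> g = {})"

definition is_cover :: "'v set \<Rightarrow> 'v set set \<Rightarrow> ('v \<Rightarrow> 'c set) \<Rightarrow> 'c set \<Rightarrow> 'c set set \<Rightarrow> bool" where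
  "is_cover V E L VH EH \<longleftrightarrow>
     simple_graph VH EH \<and>
     (\<Union>u\<in>V. L u) = VH \<and>
     (\<forall>u\<in>V. \<forall>w\<in>V. u \<noteq> w \<longrightarrow> L u \<inter> L w = {}) \<and>
     (\<forall>u\<in>V. \<forall>a\<in>L u. \<forall>b\<in>L u. a \<noteq> b \<longrightarrow> {a, b} \<in> EH) \<and>
     (\<forall>u\<in>V. \<forall>w\<in>V. edges_between EH (L u) (L w) \<noteq> {} \<longrightarrow> u = w \<or> {u, w} \<in> E) \<and>
     (\<forall>u\<in>V. \<forall>w\<in>V. {u, w} \<in> E \<longrightarrow> is_matching (edges_between EH (L u) (L w)))"

definition is_m_fold_cover :: "'v set \<Rightarrow> 'v set set \<Rightarrow> ('v \<Rightarrow> 'c set) \<Rightarrow> 'c set \<Rightarrow> 'c set set \<Rightarrow> nat \<Rightarrow> bool" where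
  "is_m_fold_cover V E L VH EH m \<longleftrightarrow> is_cover V E L VH EH \<and> (\<forall>u\<in>V. card (L u) = m)"

text \<open>Number of H-colorings: independent sets of H of size |V(G)|.\<close>
definition P_DP :: "'v set \<Rightarrow> 'c set \<Rightarrow> 'c set set \<Rightarrow> nat" where
  "P_DP V VH EH = card {I. I \<subseteq> VH \<and> (\<forall>a\<in>I. \<forall>b\<in>I. {a, b} \<notin> EH) \<and> card I = card V}"

definition chrom :: "'v set \<Rightarrow> 'v set set \<Rightarrow> nat \<Rightarrow> nat" where
  "chrom V E m = card {f \<in> V \<rightarrow>\<^sub>E {..<m}. \<forall>x\<in>V. \<forall>y\<in>V. {x, y} \<in> E \<longrightarrow> f x \<noteq> f y}"

text \<open>Natural bijection: L(v) can be labeled (v,j), j in [m] (here j < m), with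
  (u,j),(v,j) adjacent in H for every edge uv of G.\<close>
definition natural_bijection :: "'v set \<Rightarrow> 'v set set \<Rightarrow> ('v \<Rightarrow> 'c set) \<Rightarrow> 'c set set \<Rightarrow> nat \<Rightarrow> bool" where
  "natural_bijection V E L EH m \<longleftrightarrow>
     (\<exists>lab :: 'v \<Rightarrow> nat \<Rightarrow> 'c.
        (\<forall>v\<in>V. bij_betw (lab v) {..<m} (L v)) \<and>
        (\<forall>u\<in>V. \<forall>v\<in>V. {u, v} \<in> E \<longrightarrow> (\<forall>j<m. {lab u j, lab v j} \<in> EH)))"

end

theory Submission
  imports Defs
begin


definition sw :: "nat \<Rightarrow> nat \<Rightarrow> nat \<Rightarrow> nat" where
  "sw a b x = (if x = a then b else if x = b then a else x)"

lemma edges_between_sym: "edges_between X A B = edges_between X B A"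
  unfolding edges_between_def by (auto simp: insert_commute)

lemma is_matching_mono: "is_matching M \<Longrightarrow> N \<subseteq> M \<Longrightarrow> is_matching N"
  unfolding is_matching_def by blast

locale thm13 =
  fixes V :: "'v set" and E :: "'v set set" and m :: nat
    and L :: "'v \<Rightarrow> 'c set" and VH :: "'c set" and EH :: "'c set set" and u w :: 'v
    and lab :: "'v \<Rightarrow> nat \<Rightarrow> 'c"
  assumes sg: "simple_graph V E"
    and m2: "m \<ge> 2"
    and cov: "is_m_fold_cover V E L VH EH m"
    and uw: "{u, w} \<in> E"
    and labbij: "\<And>v. v\<in>V \<Longrightarrow> bij_betw (lab v) {..<m} (L v)"
    and labE: "\<And>x y j. x\<in>V \<Longrightarrow> y\<in>V \<Longrightarrow> {x, y} \<in> E - {{u,w}} \<Longrightarrow> j < m \<Longrightarrow>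
        {lab x j, lab y j} \<in> EH - edges_between EH (L u) (L w)"
begin

definition "C' = {f \<in> V \<rightarrow>\<^sub>E {..<m}. \<forall>x\<in>V. \<forall>y\<in>V. {x, y} \<in> E - {{u,w}} \<longrightarrow> f x \<noteq> f y}"
definition "C = {f \<in> V \<rightarrow>\<^sub>E {..<m}. \<forall>x\<in>V. \<forall>y\<in>V. {x, y} \<in> E \<longrightarrow> f x \<noteq> f y}"
definition "N i j = card {c\<in>C'. c u = i \<and> c w = j}"

lemma uV: "u \<in> V" and wV: "w \<in> V" and uw_ne: "u \<noteq> w"
  using sg uw unfolding simple_graph_def by (auto simp: doubleton_eq_iff)

lemma finV: "finite V" using sg unfolding simple_graph_def by auto

lemma E_ne: "{x,y}\<in>E \<Longrightarrow> x \<noteq> y"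
  using sg unfolding simple_graph_def by (auto simp: doubleton_eq_iff)

lemma E_V: "{x,y} \<in> E \<Longrightarrow> x\<in>V \<and> y\<in>V"
  using sg unfolding simple_graph_def by (auto simp: doubleton_eq_iff)

lemma finVH: "finite VH"
  using cov unfolding is_m_fold_cover_def is_cover_def simple_graph_def by auto

lemma EHedge: "f \<in> EH \<Longrightarrow> \<exists>a b. f = {a,b} \<and> a \<noteq> b \<and> a \<in> VH \<and> b \<in> VH"
  using cov unfolding is_m_fold_cover_def is_cover_def simple_graph_def by auto

lemma EH_single: "{a} \<notin> EH"
  using EHedge[of "{a}"] by (auto simp: doubleton_eq_iff)

lemma LVH: "v\<in>V \<Longrightarrow> L v \<subseteq> VH"
  using cov unfolding is_m_fold_cover_def is_cover_def by auto

lemma VHcov: "a \<in> VH \<Longrightarrow> \<exists>v\<in>V. a \<in> L v"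
  using cov unfolding is_m_fold_cover_def is_cover_def by auto

lemma Ldisj: "x\<in>V \<Longrightarrow> y\<in>V \<Longrightarrow> a \<in> L x \<Longrightarrow> a \<in> L y \<Longrightarrow> x = y"
  using cov unfolding is_m_fold_cover_def is_cover_def by blast

lemma clique: "v\<in>V \<Longrightarrow> a\<in>L v \<Longrightarrow> b\<in>L v \<Longrightarrow> a\<noteq>b \<Longrightarrow> {a,b}\<in>EH"
  using cov unfolding is_m_fold_cover_def is_cover_def by blast

lemma cross: "x\<in>V \<Longrightarrow> y\<in>V \<Longrightarrow> a\<in>L x \<Longrightarrow> b\<in>L y \<Longrightarrow> {a,b}\<in>EH \<Longrightarrow> x = y \<or> {x,y}\<in>E"
proof -
  assume h: "x\<in>V" "y\<in>V" "a\<in>L x" "b\<in>L y" "{a,b}\<in>EH"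
  hence "edges_between EH (L x) (L y) \<noteq> {}" unfolding edges_between_def by blast
  thus ?thesis using cov h(1,2) unfolding is_m_fold_cover_def is_cover_def by blast
qed

lemma matchE: "x\<in>V \<Longrightarrow> y\<in>V \<Longrightarrow> {x,y}\<in>E \<Longrightarrow> is_matching (edges_between EH (L x) (L y))"
  using cov unfolding is_m_fold_cover_def is_cover_def by blast

lemma lab_in: "v\<in>V \<Longrightarrow> i<m \<Longrightarrow> lab v i \<in> L v"
  using labbij unfolding bij_betw_def by auto

lemma lab_inj: "v\<in>V \<Longrightarrow> i<m \<Longrightarrow> j<m \<Longrightarrow> lab v i = lab v j \<longleftrightarrow> i = j"
  using labbij unfolding bij_betw_def inj_on_def by auto

lemma lab_surj: "v\<in>V \<Longrightarrow> a \<in> L v \<Longrightarrow> \<exists>i<m. a = lab v i"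
  using labbij unfolding bij_betw_def by auto

lemma lab_uw_ne: "i<m \<Longrightarrow> j<m \<Longrightarrow> lab u i \<noteq> lab w j"
  using lab_in uV wV uw_ne Ldisj by metis

lemma clique': "v\<in>V \<Longrightarrow> a\<in>L v \<Longrightarrow> b\<in>L v \<Longrightarrow> a\<noteq>b \<Longrightarrow> {a,b}\<in>EH - edges_between EH (L u) (L w)"
proof -
  assume h: "v\<in>V" "a\<in>L v" "b\<in>L v" "a\<noteq>b"
  have "{a,b} \<notin> edges_between EH (L u) (L w)"
  proof
    assume "{a,b} \<in> edges_between EH (L u) (L w)"
    then obtain a' b' where "a'\<in>L u" "b'\<in>L w" "{a,b} = {a',b'}" unfolding edges_between_def by blast
    hence "(a \<in> L u \<and> b \<in> L w) \<or> (a \<in> L w \<and> b \<in> L u)" by (auto simp: doubleton_eq_iff)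
    thus False using h Ldisj uV wV uw_ne by metis
  qed
  thus ?thesis using clique h by blast
qed

lemma cross_notin: "i<m \<Longrightarrow> j<m \<Longrightarrow> {lab u i, lab w j} \<notin> EH - edges_between EH (L u) (L w)"
  using lab_in uV wV unfolding edges_between_def by blast

lemma finC': "finite C'"
  unfolding C'_def using finV by (intro finite_subset[OF _ finite_PiE[of V "\<lambda>_. {..<m}"]]) auto

lemma C'_range: "c\<in>C' \<Longrightarrow> v\<in>V \<Longrightarrow> c v < m"
  unfolding C'_def by auto

end



context thm13
begin

lemma pair:
  assumes X1: "EH - edges_between EH (L u) (L w) \<subseteq> X"
    and X2: "X \<subseteq> (EH - edges_between EH (L u) (L w)) \<union> {{lab u i, lab w j} | i j. i<m \<and> j<m}"
    and x: "x\<in>V" and y: "y\<in>V" and i: "i<m" and j: "j<m"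
    and e: "{lab x i, lab y j} \<in> X"
  shows "(x \<noteq> y \<and> {x,y}\<in>E - {{u,w}} \<and> i = j) \<or> (x = u \<and> y = w \<and> {lab u i, lab w j} \<in> X)
     \<or> (x = w \<and> y = u \<and> {lab u j, lab w i} \<in> X) \<or> (x = y \<and> i \<noteq> j)"
proof (cases "{lab x i, lab y j} \<in> EH - edges_between EH (L u) (L w)")
  case True
  hence inEH: "{lab x i, lab y j} \<in> EH" by blast
  show ?thesis
  proof (cases "x = y")
    case True
    have "i \<noteq> j"
    proof
      assume "i = j"
      hence "{lab x i, lab y j} = {lab x i}" using True by simp
      thus False using inEH EH_single by metis
    qed
    then show ?thesis using True by blast
  next
    case xy: False
    have "{x,y} \<in> E" using cross[OF x y lab_in[OF x i] lab_in[OF y j] inEH] xy by blast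
    moreover have "{x,y} \<noteq> {u,w}"
    proof
      assume "{x,y} = {u,w}"
      hence "(x = u \<and> y = w) \<or> (x = w \<and> y = u)" by (auto simp: doubleton_eq_iff)
      hence "{lab x i, lab y j} \<in> edges_between EH (L u) (L w)"
      proof
        assume "x = u \<and> y = w"
        thus ?thesis using inEH lab_in[OF x i] lab_in[OF y j] unfolding edges_between_def by blast
      next
        assume h: "x = w \<and> y = u"
        have "{lab x i, lab y j} = {lab y j, lab x i}" by (rule insert_commute)
        thus ?thesis using h inEH lab_in[OF x i] lab_in[OF y j] unfolding edges_between_def by blast
      qed
      thus False using True by blast
    qed
    ultimately have xyE: "{x,y}\<in>E - {{u,w}}" by blast
    have "i = j"
    proof (rule ccontr)
      assume ij: "i \<noteq> j"
      have e2: "{lab x j, lab y j} \<in> EH" using labE[OF x y xyE j] by blast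
      have M: "is_matching (edges_between EH (L x) (L y))" using matchE x y xyE by blast
      have m1: "{lab x i, lab y j} \<in> edges_between EH (L x) (L y)"
        unfolding edges_between_def using inEH lab_in[OF x i] lab_in[OF y j] by blast
      have m2: "{lab x j, lab y j} \<in> edges_between EH (L x) (L y)"
        unfolding edges_between_def using e2 lab_in[OF x j] lab_in[OF y j] by blast
      have ne1: "lab x i \<noteq> lab x j" using lab_inj[OF x i j] ij by blast
      have ne2: "lab x i \<noteq> lab y j" using lab_in[OF x i] lab_in[OF y j] Ldisj[OF x y] xy by metis
      have ne: "{lab x i, lab y j} \<noteq> {lab x j, lab y j}"
        using ne1 ne2 by (simp add: doubleton_eq_iff)
      have "{lab x i, lab y j} \<inter> {lab x j, lab y j} = {}" using M m1 m2 ne unfolding is_matching_def by metis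
      thus False by simp
    qed
    thus ?thesis using xy xyE by blast
  qed
next
  case False
  then obtain i' j' where ij': "i'<m" "j'<m" "{lab x i, lab y j} = {lab u i', lab w j'}"
    using X2 e by blast
  hence "(lab x i = lab u i' \<and> lab y j = lab w j') \<or> (lab x i = lab w j' \<and> lab y j = lab u i')"
    by (auto simp: doubleton_eq_iff)
  thus ?thesis
  proof
    assume h: "lab x i = lab u i' \<and> lab y j = lab w j'"
    have "lab x i \<in> L x" "lab x i \<in> L u" using h lab_in[OF x i] lab_in[OF uV ij'(1)] by auto
    hence "x = u" using Ldisj x uV by blast
    have "lab y j \<in> L y" "lab y j \<in> L w" using h lab_in[OF y j] lab_in[OF wV ij'(2)] by auto
    hence "y = w" using Ldisj y wV by blast
    thus ?thesis using e \<open>x = u\<close> by simp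
  next
    assume h: "lab x i = lab w j' \<and> lab y j = lab u i'"
    have "lab x i \<in> L x" "lab x i \<in> L w" using h lab_in[OF x i] lab_in[OF wV ij'(2)] by auto
    hence "x = w" using Ldisj x wV by blast
    have "lab y j \<in> L y" "lab y j \<in> L u" using h lab_in[OF y j] lab_in[OF uV ij'(1)] by auto
    hence "y = u" using Ldisj y uV by blast
    hence "{lab u j, lab w i} \<in> X" using e \<open>x = w\<close> by (simp add: insert_commute)
    thus ?thesis using \<open>x = w\<close> \<open>y = u\<close> by simp
  qed
qed

definition Phi :: "('v \<Rightarrow> nat) \<Rightarrow> 'c set" where "Phi c = (\<lambda>v. lab v (c v)) ` V"

lemma indep_iff:
  assumes X1: "EH - edges_between EH (L u) (L w) \<subseteq> X"
    and X2: "X \<subseteq> (EH - edges_between EH (L u) (L w)) \<union> {{lab u i, lab w j} | i j. i<m \<and> j<m}"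
    and c: "c \<in> V \<rightarrow>\<^sub>E {..<m}"
  shows "(\<forall>a\<in>Phi c. \<forall>b\<in>Phi c. {a,b} \<notin> X) \<longleftrightarrow> (c \<in> C' \<and> {lab u (c u), lab w (c w)} \<notin> X)"
proof
  assume ind: "\<forall>a\<in>Phi c. \<forall>b\<in>Phi c. {a,b} \<notin> X"
  have "c \<in> C'"
    unfolding C'_def
  proof (intro CollectI conjI ballI impI c)
    fix x y assume x: "x\<in>V" and y: "y\<in>V" and xy: "{x,y}\<in>E - {{u,w}}"
    show "c x \<noteq> c y"
    proof
      assume "c x = c y"
      hence "{lab x (c x), lab y (c y)} \<in> X" using labE[OF x y xy, of "c y"] c y X1 by auto
      thus False using ind x y unfolding Phi_def by blast
    qed
  qed
  moreover have "{lab u (c u), lab w (c w)} \<notin> X" using ind uV wV unfolding Phi_def by blast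
  ultimately show "c \<in> C' \<and> {lab u (c u), lab w (c w)} \<notin> X" by blast
next
  assume h: "c \<in> C' \<and> {lab u (c u), lab w (c w)} \<notin> X"
  show "\<forall>a\<in>Phi c. \<forall>b\<in>Phi c. {a,b} \<notin> X"
  proof (intro ballI)
    fix a b assume "a \<in> Phi c" "b \<in> Phi c"
    then obtain x y where x: "x\<in>V" and y: "y\<in>V" and ab: "a = lab x (c x)" "b = lab y (c y)"
      unfolding Phi_def by blast
    have cx: "c x < m" and cy: "c y < m" using c x y by auto
    show "{a,b} \<notin> X"
    proof
      assume "{a,b} \<in> X"
      from pair[OF X1 X2 x y cx cy this[unfolded ab]]
      have D: "(x \<noteq> y \<and> {x,y} \<in> E - {{u,w}} \<and> c x = c y) \<or> (x = u \<and> y = w \<and> {lab u (c x), lab w (c y)} \<in> X)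
        \<or> (x = w \<and> y = u \<and> {lab u (c y), lab w (c x)} \<in> X) \<or> (x = y \<and> c x \<noteq> c y)" .
      have hc: "\<forall>x\<in>V. \<forall>y\<in>V. {x,y}\<in>E-{{u,w}} \<longrightarrow> c x \<noteq> c y" using h unfolding C'_def by blast
      from D show False
      proof (elim disjE)
        assume "x \<noteq> y \<and> {x,y} \<in> E - {{u,w}} \<and> c x = c y" thus False using hc x y by blast
      next
        assume a: "x = u \<and> y = w \<and> {lab u (c x), lab w (c y)} \<in> X"
        hence "{lab u (c u), lab w (c w)} \<in> X" by (elim conjE) simp
        thus False using h by blast
      next
        assume a: "x = w \<and> y = u \<and> {lab u (c y), lab w (c x)} \<in> X"
        hence "{lab u (c u), lab w (c w)} \<in> X" by (elim conjE) simp
        thus False using h by blast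
      next
        assume "x = y \<and> c x \<noteq> c y" thus False by (elim conjE) simp
      qed
    qed
  qed
qed

lemma count:
  assumes X1: "EH - edges_between EH (L u) (L w) \<subseteq> X"
    and X2: "X \<subseteq> (EH - edges_between EH (L u) (L w)) \<union> {{lab u i, lab w j} | i j. i<m \<and> j<m}"
  shows "P_DP V VH X = card {c\<in>C'. {lab u (c u), lab w (c w)} \<notin> X}"
proof -
  let ?D = "{c\<in>C'. {lab u (c u), lab w (c w)} \<notin> X}"
  let ?S = "{I. I \<subseteq> VH \<and> (\<forall>a\<in>I. \<forall>b\<in>I. {a, b} \<notin> X) \<and> card I = card V}"
  have DPi: "c \<in> V \<rightarrow>\<^sub>E {..<m}" if "c \<in> ?D" for c using that unfolding C'_def by blast
  have inj: "inj_on Phi ?D"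
  proof (rule inj_onI)
    fix c c' assume c: "c \<in> ?D" and c': "c' \<in> ?D" and eq: "Phi c = Phi c'"
    show "c = c'"
    proof (rule PiE_ext[OF DPi[OF c] DPi[OF c']])
      fix v assume v: "v \<in> V"
      have "lab v (c v) \<in> Phi c'" using eq v unfolding Phi_def by blast
      then obtain y where y: "y\<in>V" "lab v (c v) = lab y (c' y)" unfolding Phi_def by blast
      have cv: "c v < m" "c' y < m" "c' v < m" using DPi[OF c] DPi[OF c'] v y by auto
      have "lab v (c v) \<in> L v" "lab v (c v) \<in> L y" using lab_in[OF v cv(1)] lab_in[OF y(1) cv(2)] y(2) by auto
      hence "y = v" using Ldisj[OF y(1) v] by blast
      hence "lab v (c v) = lab v (c' v)" using y(2) by simp
      thus "c v = c' v" using lab_inj[OF v cv(1) cv(3)] by blast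
    qed
  qed
  have img: "Phi ` ?D = ?S"
  proof
    show "Phi ` ?D \<subseteq> ?S"
    proof
      fix I assume "I \<in> Phi ` ?D"
      then obtain c where c: "c \<in> ?D" and I: "I = Phi c" by blast
      have cr: "v \<in> V \<Longrightarrow> c v < m" for v using DPi[OF c] by auto
      have "I \<subseteq> VH" using I LVH lab_in cr unfolding Phi_def by blast
      moreover have "\<forall>a\<in>I. \<forall>b\<in>I. {a, b} \<notin> X" using indep_iff[OF X1 X2 DPi[OF c]] c I by blast
      moreover have "card I = card V"
      proof -
        have "inj_on (\<lambda>v. lab v (c v)) V"
        proof (rule inj_onI)
          fix x y assume x: "x \<in> V" and y: "y \<in> V" and e: "lab x (c x) = lab y (c y)"
          have "lab x (c x) \<in> L x" "lab x (c x) \<in> L y" using lab_in[OF x cr[OF x]] lab_in[OF y cr[OF y]] e by auto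
          thus "x = y" using Ldisj x y by blast
        qed
        thus ?thesis using I unfolding Phi_def by (simp add: card_image)
      qed
      ultimately show "I \<in> ?S" by blast
    qed
  next
    show "?S \<subseteq> Phi ` ?D"
    proof
      fix I assume "I \<in> ?S"
      hence IVH: "I \<subseteq> VH" and ind: "\<forall>a\<in>I. \<forall>b\<in>I. {a, b} \<notin> X" and cI: "card I = card V" by auto
      define g where "g a = (SOME v. v\<in>V \<and> a \<in> L v)" for a
      have g: "g a \<in> V \<and> a \<in> L (g a)" if "a \<in> I" for a
        unfolding g_def by (rule someI_ex) (use VHcov IVH that in blast)
      have uniq: "a = b" if "a\<in>I" "b\<in>I" "v\<in>V" "a\<in>L v" "b \<in> L v" for a b v
      proof (rule ccontr)
        assume "a \<noteq> b"
        hence "{a,b} \<in> X" using clique'[OF that(3-5)] X1 by blast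
        thus False using ind that by blast
      qed
      have ginj: "inj_on g I"
      proof (rule inj_onI)
        fix a b assume a: "a \<in> I" and b: "b \<in> I" and e: "g a = g b"
        show "a = b" using uniq[OF a b, of "g a"] g[OF a] g[OF b] e by simp
      qed
      have finI: "finite I" using IVH finVH finite_subset by blast
      have "g ` I \<subseteq> V" using g by blast
      moreover have "card (g ` I) = card V" using card_image[OF ginj] cI by simp
      ultimately have gI: "g ` I = V" using card_subset_eq finV by blast
      have ex: "\<exists>i<m. lab v i \<in> I" if v: "v \<in> V" for v
      proof -
        obtain a where a: "a \<in> I" "g a = v" using gI v by blast
        hence "a \<in> L v" using g by blast
        then obtain i where "i<m" "a = lab v i" using lab_surj v by blast
        thus ?thesis using a by blast
      qed
      define c where "c v = (if v \<in> V then (SOME i. i<m \<and> lab v i \<in> I) else undefined)" for v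
      have cv: "c v < m \<and> lab v (c v) \<in> I" if "v \<in> V" for v
        unfolding c_def using that by simp (rule someI_ex, use ex that in blast)
      have cPi: "c \<in> V \<rightarrow>\<^sub>E {..<m}" using cv unfolding c_def by auto
      have PhiI: "Phi c = I"
      proof
        show "Phi c \<subseteq> I" using cv unfolding Phi_def by blast
        show "I \<subseteq> Phi c"
        proof
          fix a assume a: "a \<in> I"
          have "a = lab (g a) (c (g a))"
            using uniq[OF a, of "lab (g a) (c (g a))" "g a"] g[OF a] cv[of "g a"] lab_in[of "g a" "c (g a)"] by simp
          thus "a \<in> Phi c" using g[OF a] unfolding Phi_def by blast
        qed
      qed
      have "c \<in> ?D" using indep_iff[OF X1 X2 cPi] PhiI ind by blast
      thus "I \<in> Phi ` ?D" using PhiI by blast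
    qed
  qed
  show ?thesis unfolding P_DP_def using img card_image[OF inj] by simp
qed

end



context thm13
begin

lemma sum_N:
  assumes S: "S \<subseteq> {..<m} \<times> {..<m}"
  shows "card {c\<in>C'. (c u, c w) \<in> S} = (\<Sum>p\<in>S. N (fst p) (snd p))"
proof -
  have finS: "finite S" using S finite_subset by blast
  have eq: "{c\<in>C'. (c u, c w) \<in> S} = (\<Union>p\<in>S. {c\<in>C'. c u = fst p \<and> c w = snd p})" by auto
  have "card (\<Union>p\<in>S. {c\<in>C'. c u = fst p \<and> c w = snd p}) = (\<Sum>p\<in>S. card {c\<in>C'. c u = fst p \<and> c w = snd p})"
    by (rule card_UN_disjoint) (use finS finC' in auto)
  thus ?thesis using eq unfolding N_def by simp
qed

definition R :: "'c set set \<Rightarrow> (nat \<times> nat) set" where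
  "R X = {p\<in>{..<m}\<times>{..<m}. {lab u (fst p), lab w (snd p)} \<in> X}"

lemma count2:
  assumes X1: "EH - edges_between EH (L u) (L w) \<subseteq> X"
    and X2: "X \<subseteq> (EH - edges_between EH (L u) (L w)) \<union> {{lab u i, lab w j} | i j. i<m \<and> j<m}"
  shows "real (P_DP V VH X) = real (card C') - (\<Sum>p\<in>R X. real (N (fst p) (snd p)))"
proof -
  have e1: "{c\<in>C'. {lab u (c u), lab w (c w)} \<notin> X} = {c\<in>C'. (c u, c w) \<notin> R X}"
  proof (rule Collect_cong)
    fix c
    show "(c \<in> C' \<and> {lab u (c u), lab w (c w)} \<notin> X) = (c \<in> C' \<and> (c u, c w) \<notin> R X)"
      using C'_range[of c u] C'_range[of c w] uV wV unfolding R_def by auto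
  qed
  have un: "C' = {c\<in>C'. (c u, c w) \<in> R X} \<union> {c\<in>C'. (c u, c w) \<notin> R X}" by blast
  have "card ({c\<in>C'. (c u, c w) \<in> R X} \<union> {c\<in>C'. (c u, c w) \<notin> R X}) = card {c\<in>C'. (c u, c w) \<in> R X} + card {c\<in>C'. (c u, c w) \<notin> R X}"
    by (rule card_Un_disjoint) (use finC' in auto)
  hence h1: "card C' = card {c\<in>C'. (c u, c w) \<in> R X} + card {c\<in>C'. (c u, c w) \<notin> R X}"
    by (rule trans[OF arg_cong[OF un, of card]])
  have h2: "card {c\<in>C'. (c u, c w) \<in> R X} = (\<Sum>p\<in>R X. N (fst p) (snd p))"
    by (rule sum_N) (auto simp: R_def)
  have h3: "P_DP V VH X = card {c\<in>C'. (c u, c w) \<notin> R X}" using count[OF X1 X2] by (simp only: e1)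
  have h4: "(\<Sum>p\<in>R X. real (N (fst p) (snd p))) = real (\<Sum>p\<in>R X. N (fst p) (snd p))"
    by (rule of_nat_sum[symmetric])
  have h5: "real (card C') = real (card {c\<in>C'. (c u, c w) \<in> R X}) + real (card {c\<in>C'. (c u, c w) \<notin> R X})"
    using h1 by (simp only: of_nat_add[symmetric])
  have h6: "real (card {c\<in>C'. (c u, c w) \<in> R X}) = real (\<Sum>p\<in>R X. N (fst p) (snd p))"
    using h2 by (simp only:)
  have h7: "real (P_DP V VH X) = real (card {c\<in>C'. (c u, c w) \<notin> R X})" using h3 by (simp only:)
  show ?thesis using h4 h5 h6 h7 by linarith
qed

lemma N_le:
  assumes inj: "inj_on \<pi> {..<m}" and into: "\<And>k. k<m \<Longrightarrow> \<pi> k < m"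
  shows "N i j \<le> N (\<pi> i) (\<pi> j)"
proof -
  define f where "f c = (\<lambda>v. if v \<in> V then \<pi> (c v) else undefined)" for c :: "'v \<Rightarrow> nat"
  have fi: "inj_on f {c\<in>C'. c u = i \<and> c w = j}"
  proof (rule inj_onI)
    fix c c' assume c: "c \<in> {c\<in>C'. c u = i \<and> c w = j}" and c': "c' \<in> {c\<in>C'. c u = i \<and> c w = j}"
      and e: "f c = f c'"
    have P: "c \<in> V \<rightarrow>\<^sub>E {..<m}" "c' \<in> V \<rightarrow>\<^sub>E {..<m}" using c c' unfolding C'_def by auto
    show "c = c'"
    proof (rule PiE_ext[OF P])
      fix v assume v: "v \<in> V"
      have "\<pi> (c v) = \<pi> (c' v)" using e v unfolding f_def by (metis)
      thus "c v = c' v" using inj P v unfolding inj_on_def by auto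
    qed
  qed
  have fm: "f ` {c\<in>C'. c u = i \<and> c w = j} \<subseteq> {c\<in>C'. c u = \<pi> i \<and> c w = \<pi> j}"
  proof
    fix d assume "d \<in> f ` {c\<in>C'. c u = i \<and> c w = j}"
    then obtain c where c: "c \<in> C'" "c u = i" "c w = j" and d: "d = f c" by blast
    have cr: "v \<in> V \<Longrightarrow> c v < m" for v using C'_range c by blast
    have "d \<in> V \<rightarrow>\<^sub>E {..<m}" using cr into unfolding d f_def by auto
    moreover have "\<forall>x\<in>V. \<forall>y\<in>V. {x, y} \<in> E - {{u,w}} \<longrightarrow> d x \<noteq> d y"
    proof (intro ballI impI)
      fix x y assume x: "x\<in>V" and y: "y\<in>V" and xy: "{x, y} \<in> E - {{u,w}}"
      have "c x \<noteq> c y" using c(1) x y xy unfolding C'_def by blast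
      thus "d x \<noteq> d y" using inj cr x y unfolding d f_def inj_on_def by auto
    qed
    ultimately show "d \<in> {c\<in>C'. c u = \<pi> i \<and> c w = \<pi> j}"
      using c uV wV unfolding C'_def d f_def by auto
  qed
  show ?thesis unfolding N_def
    by (rule card_inj_on_le[OF fi fm]) (use finC' in auto)
qed

lemma sw_props: "a < m \<Longrightarrow> b < m \<Longrightarrow> inj_on (sw a b) {..<m} \<and> (\<forall>k<m. sw a b k < m) \<and> (\<forall>k. sw a b (sw a b k) = k)"
  unfolding sw_def inj_on_def by auto

lemma N_sw: "a < m \<Longrightarrow> b < m \<Longrightarrow> N (sw a b i) (sw a b j) = N i j"
proof -
  assume ab: "a < m" "b < m"
  note sp = sw_props[OF ab]
  have "N i j \<le> N (sw a b i) (sw a b j)" using N_le sp by blast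
  moreover have "N (sw a b i) (sw a b j) \<le> N (sw a b (sw a b i)) (sw a b (sw a b j))" using N_le sp by blast
  ultimately show ?thesis using sp by simp
qed

lemma m0: "0 < m" and m1: "1 < m" using m2 by auto

lemma sw_b: "sw a b b = a" by (simp add: sw_def)
lemma sw_a: "sw a b a = b" by (simp add: sw_def)
lemma sw_o: "x \<noteq> a \<Longrightarrow> x \<noteq> b \<Longrightarrow> sw a b x = x" by (simp add: sw_def)

lemma N_diag: "i < m \<Longrightarrow> N i i = N 0 0"
  using N_sw[OF m0, of i i i] by (simp add: sw_b)

lemma N_off: assumes i: "i < m" and j: "j < m" and ij: "i \<noteq> j" shows "N i j = N 0 1"
proof -
  define j' where "j' = sw 0 i j"
  have j'm: "j' < m" using sw_props[OF m0 i] j unfolding j'_def by blast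
  have j'0: "j' \<noteq> 0" using ij unfolding j'_def sw_def by auto
  have "N i j = N 0 j'" using N_sw[OF m0 i, of i j] unfolding j'_def by (simp add: sw_b)
  also have "\<dots> = N 0 1" using N_sw[OF m1 j'm, of 0 j'] j'0 by (simp add: sw_b sw_o)
  finally show ?thesis .
qed

end



context thm13
begin

lemma C_eq: "C = {c\<in>C'. c u \<noteq> c w}"
proof
  show "C \<subseteq> {c\<in>C'. c u \<noteq> c w}"
    using uw uV wV unfolding C_def C'_def by blast
next
  show "{c\<in>C'. c u \<noteq> c w} \<subseteq> C"
  proof
    fix c assume c: "c \<in> {c\<in>C'. c u \<noteq> c w}"
    have "\<forall>x\<in>V. \<forall>y\<in>V. {x, y} \<in> E \<longrightarrow> c x \<noteq> c y"
    proof (intro ballI impI)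
      fix x y assume x: "x\<in>V" and y: "y\<in>V" and xy: "{x,y}\<in>E"
      show "c x \<noteq> c y"
      proof (cases "{x,y} = {u,w}")
        case True
        hence "(x = u \<and> y = w) \<or> (x = w \<and> y = u)" by (simp add: doubleton_eq_iff)
        thus ?thesis using c by auto
      next
        case False
        thus ?thesis using c x y xy unfolding C'_def by blast
      qed
    qed
    thus "c \<in> C" using c unfolding C_def C'_def by blast
  qed
qed

definition "Dg = (\<lambda>i. (i,i)) ` {..<m}"

lemma card_split: "card C' = card {c\<in>C'. c u = c w} + card C"
proof -
  have un: "C' = {c\<in>C'. c u = c w} \<union> {c\<in>C'. c u \<noteq> c w}" by blast
  have "card ({c\<in>C'. c u = c w} \<union> {c\<in>C'. c u \<noteq> c w}) = card {c\<in>C'. c u = c w} + card {c\<in>C'. c u \<noteq> c w}"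
    by (rule card_Un_disjoint) (use finC' in auto)
  thus ?thesis unfolding C_eq by (rule trans[OF arg_cong[OF un, of card]])
qed

lemma diag_sum: "card {c\<in>C'. c u = c w} = m * N 0 0"
proof -
  have e: "{c\<in>C'. c u = c w} = {c\<in>C'. (c u, c w) \<in> Dg}"
  proof (rule Collect_cong)
    fix c show "(c \<in> C' \<and> c u = c w) = (c \<in> C' \<and> (c u, c w) \<in> Dg)"
      using C'_range[of c u] uV unfolding Dg_def by auto
  qed
  have "card {c\<in>C'. (c u, c w) \<in> Dg} = (\<Sum>p\<in>Dg. N (fst p) (snd p))"
    by (rule sum_N) (auto simp: Dg_def)
  also have "\<dots> = (\<Sum>i<m. N i i)"
    unfolding Dg_def by (rule trans[OF sum.reindex]) (auto simp: inj_on_def)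
  also have "\<dots> = (\<Sum>i<m. N 0 0)" by (rule sum.cong[OF refl]) (use N_diag in blast)
  also have "\<dots> = m * N 0 0" by simp
  finally show ?thesis unfolding e .
qed

lemma off_sum: "card C = (m * m - m) * N 0 1"
proof -
  define Off where "Off = {..<m} \<times> {..<m} - Dg"
  have e: "C = {c\<in>C'. (c u, c w) \<in> Off}"
    unfolding C_eq
  proof (rule Collect_cong)
    fix c show "(c \<in> C' \<and> c u \<noteq> c w) = (c \<in> C' \<and> (c u, c w) \<in> Off)"
      using C'_range[of c u] C'_range[of c w] uV wV unfolding Off_def Dg_def by auto
  qed
  have "card {c\<in>C'. (c u, c w) \<in> Off} = (\<Sum>p\<in>Off. N (fst p) (snd p))"
    by (rule sum_N) (auto simp: Off_def)
  also have "\<dots> = (\<Sum>p\<in>Off. N 0 1)"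
  proof (rule sum.cong[OF refl])
    fix p assume p: "p \<in> Off"
    obtain i j where ij: "p = (i,j)" by (cases p)
    have h: "i < m" "j < m" "i \<noteq> j" using p unfolding ij Off_def Dg_def by auto
    show "N (fst p) (snd p) = N 0 1" using N_off[OF h] ij by simp
  qed
  also have "\<dots> = card Off * N 0 1" by simp
  also have "card Off = m * m - m"
  proof -
    have "card Dg = m" unfolding Dg_def by (subst card_image) (auto simp: inj_on_def)
    moreover have "Dg \<subseteq> {..<m} \<times> {..<m}" unfolding Dg_def by auto
    ultimately show ?thesis unfolding Off_def by (simp add: card_Diff_subset finite_subset card_cartesian_product)
  qed
  finally show ?thesis using e by simp
qed

lemma R_EH_card: "card (R EH) \<le> m"
proof -
  have "inj_on fst (R EH)"
  proof (rule inj_onI)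
    fix p q assume p: "p \<in> R EH" and q: "q \<in> R EH" and e: "fst p = fst q"
    obtain i j where pij: "p = (i,j)" by (cases p)
    obtain j' where qij: "q = (i,j')" using e pij by (cases q) auto
    have ij: "i<m" "j<m" "j'<m" and e1: "{lab u i, lab w j} \<in> EH" and e2: "{lab u i, lab w j'} \<in> EH"
      using p q unfolding pij qij R_def by auto
    have M: "is_matching (edges_between EH (L u) (L w))" using matchE[OF uV wV uw] .
    have m1: "{lab u i, lab w j} \<in> edges_between EH (L u) (L w)"
      unfolding edges_between_def using e1 lab_in[OF uV ij(1)] lab_in[OF wV ij(2)] by blast
    have m2: "{lab u i, lab w j'} \<in> edges_between EH (L u) (L w)"
      unfolding edges_between_def using e2 lab_in[OF uV ij(1)] lab_in[OF wV ij(3)] by blast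
    show "p = q"
    proof (rule ccontr)
      assume "p \<noteq> q"
      hence "j \<noteq> j'" using pij qij by simp
      hence "lab w j \<noteq> lab w j'" using lab_inj[OF wV ij(2) ij(3)] by simp
      hence ne: "{lab u i, lab w j} \<noteq> {lab u i, lab w j'}"
        using lab_uw_ne[OF ij(1) ij(2)] by (simp add: doubleton_eq_iff)
      have "{lab u i, lab w j} \<inter> {lab u i, lab w j'} = {}" using M m1 m2 ne unfolding is_matching_def by metis
      thus False by simp
    qed
  qed
  moreover have "fst ` R EH \<subseteq> {..<m}" unfolding R_def by auto
  ultimately show ?thesis using card_inj_on_le[of fst "R EH" "{..<m}"] by simp
qed

lemma N_le_max: "p \<in> {..<m} \<times> {..<m} \<Longrightarrow> N (fst p) (snd p) \<le> max (N 0 0) (N 0 1)"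
proof -
  assume p: "p \<in> {..<m} \<times> {..<m}"
  obtain i j where ij: "p = (i,j)" by (cases p)
  have "N i j \<le> max (N 0 0) (N 0 1)"
  proof (cases "i = j")
    case True thus ?thesis using N_diag[of i] p ij by simp
  next
    case False thus ?thesis using N_off[of i j] p ij by simp
  qed
  thus ?thesis using ij by simp
qed

lemma lower:
  "real (P_DP V VH EH) \<ge> real (card C') - real m * max (real (N 0 0)) (real (N 0 1))"
proof -
  have X1: "EH - edges_between EH (L u) (L w) \<subseteq> EH" by blast
  have X2: "EH \<subseteq> (EH - edges_between EH (L u) (L w)) \<union> {{lab u i, lab w j} | i j. i<m \<and> j<m}"
  proof
    fix f assume f: "f \<in> EH"
    show "f \<in> (EH - edges_between EH (L u) (L w)) \<union> {{lab u i, lab w j} | i j. i<m \<and> j<m}"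
    proof (cases "f \<in> edges_between EH (L u) (L w)")
      case True
      then obtain a b where ab: "a \<in> L u" "b \<in> L w" "f = {a,b}" unfolding edges_between_def by blast
      obtain i where i: "i<m" "a = lab u i" using lab_surj[OF uV ab(1)] by blast
      obtain j where j: "j<m" "b = lab w j" using lab_surj[OF wV ab(2)] by blast
      show ?thesis using i j ab(3) by blast
    qed (use f in blast)
  qed
  have finR: "finite (R EH)" unfolding R_def by (rule finite_subset[of _ "{..<m} \<times> {..<m}"]) auto
  have "(\<Sum>p\<in>R EH. real (N (fst p) (snd p))) \<le> (\<Sum>p\<in>R EH. max (real (N 0 0)) (real (N 0 1)))"
  proof (rule sum_mono)
    fix p assume "p \<in> R EH"
    hence "p \<in> {..<m} \<times> {..<m}" unfolding R_def by blast
    hence "N (fst p) (snd p) \<le> max (N 0 0) (N 0 1)" by (rule N_le_max)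
    hence "real (N (fst p) (snd p)) \<le> real (max (N 0 0) (N 0 1))" by (rule of_nat_mono)
    thus "real (N (fst p) (snd p)) \<le> max (real (N 0 0)) (real (N 0 1))" by (simp add: of_nat_max)
  qed
  also have "\<dots> = real (card (R EH)) * max (real (N 0 0)) (real (N 0 1))" by simp
  also have "\<dots> \<le> real m * max (real (N 0 0)) (real (N 0 1))"
    using R_EH_card by (intro mult_right_mono) auto
  finally show ?thesis using count2[OF X1 X2] by linarith
qed

end



context thm13
begin

definition EHs :: "(nat \<Rightarrow> nat) \<Rightarrow> 'c set set" where
  "EHs \<sigma> = (EH - edges_between EH (L u) (L w)) \<union> {{lab u i, lab w (\<sigma> i)} | i. i<m}"

lemma inUW: "x\<in>V \<Longrightarrow> a \<in> L x \<Longrightarrow> a \<in> {lab u i, lab w k} \<Longrightarrow> i<m \<Longrightarrow> k<m \<Longrightarrow> x = u \<or> x = w"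
proof -
  assume h: "x\<in>V" "a \<in> L x" "a \<in> {lab u i, lab w k}" "i<m" "k<m"
  hence "a = lab u i \<or> a = lab w k" by blast
  thus ?thesis
  proof
    assume "a = lab u i" hence "a \<in> L u" using lab_in[OF uV h(4)] by simp
    thus ?thesis using Ldisj[OF h(1) uV h(2)] by blast
  next
    assume "a = lab w k" hence "a \<in> L w" using lab_in[OF wV h(5)] by simp
    thus ?thesis using Ldisj[OF h(1) wV h(2)] by blast
  qed
qed

lemma E_uw: "x = u \<or> x = w \<Longrightarrow> y = u \<or> y = w \<Longrightarrow> x \<noteq> y \<Longrightarrow> {x,y} = {u,w}"
  by auto

context
  fixes \<sigma> :: "nat \<Rightarrow> nat"
  assumes sinj: "inj_on \<sigma> {..<m}" and sinto: "\<And>i. i<m \<Longrightarrow> \<sigma> i < m"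
begin

lemma crossX:
  assumes x: "x\<in>V" and y: "y\<in>V" and a: "a\<in>L x" and b: "b\<in>L y" and ab: "{a,b}\<in>EHs \<sigma>"
  shows "x = y \<or> {x,y}\<in>E"
proof (cases "{a,b} \<in> EH")
  case True thus ?thesis using cross[OF x y a b] by blast
next
  case False
  then obtain i where i: "i<m" "{a,b} = {lab u i, lab w (\<sigma> i)}" using ab unfolding EHs_def by blast
  have "a \<in> {lab u i, lab w (\<sigma> i)}" "b \<in> {lab u i, lab w (\<sigma> i)}" using i(2) by auto
  hence xu: "x = u \<or> x = w" and yu: "y = u \<or> y = w" using inUW x y a b i(1) sinto[OF i(1)] by blast+
  show ?thesis
  proof (cases "x = y")
    case False
    hence "{x,y} = {u,w}" using E_uw[OF xu yu] by blast
    thus ?thesis using uw by simp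
  qed simp
qed

lemma NE_match: "is_matching {{lab u i, lab w (\<sigma> i)} | i. i<m}"
  unfolding is_matching_def
proof (intro ballI impI)
  fix f g assume "f \<in> {{lab u i, lab w (\<sigma> i)} | i. i<m}" "g \<in> {{lab u i, lab w (\<sigma> i)} | i. i<m}" and fg: "f \<noteq> g"
  then obtain i j where i: "i<m" "f = {lab u i, lab w (\<sigma> i)}" and j: "j<m" "g = {lab u j, lab w (\<sigma> j)}" by blast
  have ij: "i \<noteq> j" using fg i j by blast
  have s: "\<sigma> i \<noteq> \<sigma> j" using sinj ij i(1) j(1) unfolding inj_on_def by blast
  have 1: "lab u i \<noteq> lab u j" using lab_inj[OF uV i(1) j(1)] ij by blast
  have 2: "lab w (\<sigma> i) \<noteq> lab w (\<sigma> j)" using lab_inj[OF wV sinto[OF i(1)] sinto[OF j(1)]] s by blast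
  have 3: "lab u i \<noteq> lab w (\<sigma> j)" using lab_uw_ne[OF i(1) sinto[OF j(1)]] .
  have 4: "lab u j \<noteq> lab w (\<sigma> i)" using lab_uw_ne[OF j(1) sinto[OF i(1)]] .
  show "f \<inter> g = {}" unfolding i(2) j(2) using 1 2 3 4 by auto
qed

lemma cover_sigma: "is_m_fold_cover V E L VH (EHs \<sigma>) m"
proof -
  have c1: "simple_graph VH (EHs \<sigma>)"
    unfolding simple_graph_def
  proof (intro conjI finVH subsetI)
    fix f assume f: "f \<in> EHs \<sigma>"
    show "f \<in> {e. \<exists>x y. e = {x, y} \<and> x \<noteq> y \<and> x \<in> VH \<and> y \<in> VH}"
    proof (cases "f \<in> EH")
      case True thus ?thesis using EHedge by blast
    next
      case False
      then obtain i where i: "i<m" "f = {lab u i, lab w (\<sigma> i)}" using f unfolding EHs_def by blast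
      have "lab u i \<in> VH" "lab w (\<sigma> i) \<in> VH"
        using LVH[OF uV] LVH[OF wV] lab_in[OF uV i(1)] lab_in[OF wV sinto[OF i(1)]] by auto
      thus ?thesis using i lab_uw_ne[OF i(1) sinto[OF i(1)]] by blast
    qed
  qed
  have c2: "(\<Union>u\<in>V. L u) = VH" and c3: "\<forall>u\<in>V. \<forall>w\<in>V. u \<noteq> w \<longrightarrow> L u \<inter> L w = {}"
    and c7: "\<forall>u\<in>V. card (L u) = m"
    using cov unfolding is_m_fold_cover_def is_cover_def by auto
  have c4: "\<forall>v\<in>V. \<forall>a\<in>L v. \<forall>b\<in>L v. a \<noteq> b \<longrightarrow> {a, b} \<in> EHs \<sigma>"
    using clique' unfolding EHs_def by blast
  have c5: "\<forall>x\<in>V. \<forall>y\<in>V. edges_between (EHs \<sigma>) (L x) (L y) \<noteq> {} \<longrightarrow> x = y \<or> {x, y} \<in> E"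
  proof (intro ballI impI)
    fix x y assume x: "x\<in>V" and y: "y\<in>V" and ne: "edges_between (EHs \<sigma>) (L x) (L y) \<noteq> {}"
    then obtain a b where "a\<in>L x" "b\<in>L y" "{a,b} \<in> EHs \<sigma>" unfolding edges_between_def by blast
    thus "x = y \<or> {x, y} \<in> E" using crossX[OF x y] by blast
  qed
  have c6: "\<forall>x\<in>V. \<forall>y\<in>V. {x, y} \<in> E \<longrightarrow> is_matching (edges_between (EHs \<sigma>) (L x) (L y))"
  proof (intro ballI impI)
    fix x y assume x: "x\<in>V" and y: "y\<in>V" and xyE: "{x,y}\<in>E"
    show "is_matching (edges_between (EHs \<sigma>) (L x) (L y))"
    proof (cases "{x,y} = {u,w}")
      case True
      have "edges_between (EHs \<sigma>) (L x) (L y) \<subseteq> {{lab u i, lab w (\<sigma> i)} | i. i<m}"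
      proof
        fix f assume f: "f \<in> edges_between (EHs \<sigma>) (L x) (L y)"
        have fb: "f \<in> edges_between (EHs \<sigma>) (L u) (L w)"
          using True f edges_between_sym[of "EHs \<sigma>" "L u" "L w"] by (auto simp: doubleton_eq_iff)
        then obtain a b where ab: "f \<in> EHs \<sigma>" "a \<in> L u" "b \<in> L w" "f = {a,b}" unfolding edges_between_def by blast
        show "f \<in> {{lab u i, lab w (\<sigma> i)} | i. i<m}"
        proof (rule ccontr)
          assume "f \<notin> {{lab u i, lab w (\<sigma> i)} | i. i<m}"
          hence "f \<in> EH - edges_between EH (L u) (L w)" using ab(1) unfolding EHs_def by blast
          moreover have "f \<in> edges_between EH (L u) (L w)" using calculation ab unfolding edges_between_def by blast
          ultimately show False by blast
        qed
      qed
      thus ?thesis using NE_match is_matching_mono by blast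
    next
      case False
      have "edges_between (EHs \<sigma>) (L x) (L y) \<subseteq> edges_between EH (L x) (L y)"
      proof
        fix f assume f: "f \<in> edges_between (EHs \<sigma>) (L x) (L y)"
        then obtain a b where ab: "f \<in> EHs \<sigma>" "a \<in> L x" "b \<in> L y" "f = {a,b}" unfolding edges_between_def by blast
        have "f \<in> EH"
        proof (rule ccontr)
          assume "f \<notin> EH"
          then obtain i where i: "i<m" "f = {lab u i, lab w (\<sigma> i)}" using ab(1) unfolding EHs_def by blast
          have "a \<in> {lab u i, lab w (\<sigma> i)}" "b \<in> {lab u i, lab w (\<sigma> i)}" using i(2) ab(4) by auto
          hence xu: "x = u \<or> x = w" and yu: "y = u \<or> y = w"
            using inUW x y ab(2,3) i(1) sinto[OF i(1)] by blast+
          have "{x,y} = {u,w}" using E_uw[OF xu yu E_ne[OF xyE]] .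
          thus False using False by blast
        qed
        thus "f \<in> edges_between EH (L x) (L y)" using ab unfolding edges_between_def by blast
      qed
      thus ?thesis using matchE[OF x y xyE] is_matching_mono by blast
    qed
  qed
  show ?thesis unfolding is_m_fold_cover_def is_cover_def
    using c1 c2 c3 c4 c5 c6 c7 by blast
qed

lemma R_sigma: "R (EHs \<sigma>) = (\<lambda>i. (i, \<sigma> i)) ` {..<m}"
proof
  show "R (EHs \<sigma>) \<subseteq> (\<lambda>i. (i, \<sigma> i)) ` {..<m}"
  proof
    fix p assume p: "p \<in> R (EHs \<sigma>)"
    obtain i j where ij: "p = (i,j)" by (cases p)
    have h: "i<m" "j<m" "{lab u i, lab w j} \<in> EHs \<sigma>" using p unfolding ij R_def by auto
    have "{lab u i, lab w j} \<notin> EH - edges_between EH (L u) (L w)" using cross_notin[OF h(1,2)] .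
    then obtain k where k: "k<m" "{lab u i, lab w j} = {lab u k, lab w (\<sigma> k)}" using h(3) unfolding EHs_def by blast
    have "lab u i \<noteq> lab w (\<sigma> k)" using lab_uw_ne[OF h(1) sinto[OF k(1)]] .
    hence "lab u i = lab u k \<and> lab w j = lab w (\<sigma> k)" using k(2) by (auto simp: doubleton_eq_iff)
    hence "i = k" "j = \<sigma> k" using lab_inj[OF uV h(1) k(1)] lab_inj[OF wV h(2) sinto[OF k(1)]] by auto
    thus "p \<in> (\<lambda>i. (i, \<sigma> i)) ` {..<m}" using ij k(1) by blast
  qed
next
  show "(\<lambda>i. (i, \<sigma> i)) ` {..<m} \<subseteq> R (EHs \<sigma>)"
    unfolding R_def EHs_def using sinto by auto
qed

lemma P_sigma: "real (P_DP V VH (EHs \<sigma>)) = real (card C') - (\<Sum>i<m. real (N i (\<sigma> i)))"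
proof -
  have X1: "EH - edges_between EH (L u) (L w) \<subseteq> EHs \<sigma>" unfolding EHs_def by blast
  have X2: "EHs \<sigma> \<subseteq> (EH - edges_between EH (L u) (L w)) \<union> {{lab u i, lab w j} | i j. i<m \<and> j<m}"
    unfolding EHs_def using sinto by blast
  have "(\<Sum>p\<in>R (EHs \<sigma>). real (N (fst p) (snd p))) = (\<Sum>i<m. real (N i (\<sigma> i)))"
    unfolding R_sigma by (rule trans[OF sum.reindex]) (auto simp: inj_on_def)
  thus ?thesis using count2[OF X1 X2] by simp
qed

end

end



lemma shift_eq: "i < m \<Longrightarrow> Suc i mod m = (if Suc i = m then 0 else Suc i)"
  by auto

lemma shift_inj: "inj_on (\<lambda>i. Suc i mod (m::nat)) {..<m}"
proof (rule inj_onI)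
  fix i j assume i: "i \<in> {..<m}" and j: "j \<in> {..<m}" and e: "Suc i mod m = Suc j mod m"
  show "i = j" using e shift_eq[of i m] shift_eq[of j m] i j by (auto split: if_splits)
qed

context thm13
begin

lemma main_loc:
  shows "real (P_DP V VH EH) \<ge>
           real (chrom V (E - {{u, w}}) m)
           - max (real (chrom V (E - {{u, w}}) m) - real (chrom V E m))
                 (real (chrom V E m) / (real m - 1))
       \<and> (\<exists>EH' :: 'c set set. is_m_fold_cover V E L VH EH' m \<and>
           real (P_DP V VH EH') =
           real (chrom V (E - {{u, w}}) m)
           - max (real (chrom V (E - {{u, w}}) m) - real (chrom V E m))
                 (real (chrom V E m) / (real m - 1)))"
proof -
  have ch1: "chrom V (E - {{u, w}}) m = card C'" unfolding chrom_def C'_def ..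
  have ch2: "chrom V E m = card C" unfolding chrom_def C_def ..
  define A where "A = real (N 0 0)"
  define B where "B = real (N 0 1)"
  have mr: "real m \<ge> 2" using m2 by simp
  have n1: "card C' = m * N 0 0 + card C" using card_split diag_sum by simp
  hence "real (card C') = real m * A + real (card C)" unfolding A_def by (metis of_nat_add of_nat_mult)
  hence hA: "real (card C') - real (card C) = real m * A" by linarith
  have hB0: "real (card C) = real (m * m - m) * B" using off_sum unfolding B_def by (metis of_nat_mult)
  have "real (m * m - m) = real m * (real m - 1)"
  proof -
    have "m \<le> m * m" using m2 by simp
    hence "real (m * m - m) = real m * real m - real m" by (simp add: of_nat_diff)
    thus ?thesis by (simp add: algebra_simps)
  qed
  hence hB1: "real (card C) = (real m * B) * (real m - 1)" using hB0 by simp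
  have mpos: "real m - 1 \<noteq> 0" using mr by simp
  have hB: "real (card C) / (real m - 1) = real m * B"
    unfolding hB1 using mpos by (rule nonzero_mult_div_cancel_right)
  have mx0: "max (real m * A) (real m * B) = real m * max A B"
  proof (cases "A \<le> B")
    case True
    hence "real m * A \<le> real m * B" using mr by (intro mult_left_mono) auto
    thus ?thesis using True by (simp add: max_def)
  next
    case False
    hence "real m * B \<le> real m * A" using mr by (intro mult_left_mono) auto
    thus ?thesis using False by (simp add: max_def)
  qed
  have mx: "max (real (card C') - real (card C)) (real (card C) / (real m - 1)) = real m * max A B"
    unfolding hA hB by (rule mx0)
  have part1: "real (P_DP V VH EH) \<ge> real (card C') - real m * max A B"
    using lower unfolding A_def B_def .
  have part2: "\<exists>EH' :: 'c set set. is_m_fold_cover V E L VH EH' m \<and>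
           real (P_DP V VH EH') = real (card C') - real m * max A B"
  proof (cases "B \<le> A")
    case True
    have s1: "inj_on (\<lambda>i. i) {..<m}" "\<And>i. i < m \<Longrightarrow> i < m" by auto
    have "(\<Sum>i<m. real (N i i)) = (\<Sum>i<m. A)"
    proof (rule sum.cong[OF refl])
      fix i assume i: "i \<in> {..<m}"
      have "N i i = N 0 0" using N_diag i by blast
      thus "real (N i i) = A" unfolding A_def by simp
    qed
    hence "real (P_DP V VH (EHs (\<lambda>i. i))) = real (card C') - real m * max A B"
      using P_sigma[OF s1] True by (simp add: max_def)
    thus ?thesis using cover_sigma[OF s1] by blast
  next
    case False
    have s1: "inj_on (\<lambda>i. Suc i mod m) {..<m}" "\<And>i. i < m \<Longrightarrow> Suc i mod m < m"
      using shift_inj m2 by auto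
    have "(\<Sum>i<m. real (N i (Suc i mod m))) = (\<Sum>i<m. B)"
    proof (rule sum.cong[OF refl])
      fix i assume i: "i \<in> {..<m}"
      have "i \<noteq> Suc i mod m" using shift_eq[of i m] i m2 by auto
      hence "N i (Suc i mod m) = N 0 1" using N_off[of i "Suc i mod m"] i s1(2)[of i] by blast
      thus "real (N i (Suc i mod m)) = B" unfolding B_def by simp
    qed
    hence "real (P_DP V VH (EHs (\<lambda>i. Suc i mod m))) = real (card C') - real m * max A B"
      using P_sigma[OF s1] False by (simp add: max_def)
    thus ?thesis using cover_sigma[OF s1] by blast
  qed
  show ?thesis unfolding ch1 ch2 mx using part1 part2 by blast
qed

end

theorem mainTheorem13:
  fixes V :: "'v set" and E :: "'v set set" and m :: nat
    and L :: "'v \<Rightarrow> 'c set" and VH :: "'c set" and EH :: "'c set set" and u w :: 'v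
  assumes "simple_graph V E"
    and "m \<ge> 2"
    and "is_m_fold_cover V E L VH EH m"
    and "{u, w} \<in> E"
    and "natural_bijection V (E - {{u, w}}) L (EH - edges_between EH (L u) (L w)) m"
  shows "real (P_DP V VH EH) \<ge>
           real (chrom V (E - {{u, w}}) m)
           - max (real (chrom V (E - {{u, w}}) m) - real (chrom V E m))
                 (real (chrom V E m) / (real m - 1))
       \<and> (\<exists>EH' :: 'c set set. is_m_fold_cover V E L VH EH' m \<and>
           real (P_DP V VH EH') =
           real (chrom V (E - {{u, w}}) m)
           - max (real (chrom V (E - {{u, w}}) m) - real (chrom V E m))
                 (real (chrom V E m) / (real m - 1)))"
proof -
  obtain lab :: "'v \<Rightarrow> nat \<Rightarrow> 'c" where
    l1: "\<forall>v\<in>V. bij_betw (lab v) {..<m} (L v)" and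
    l2: "\<forall>x\<in>V. \<forall>y\<in>V. {x, y} \<in> E - {{u, w}} \<longrightarrow> (\<forall>j<m. {lab x j, lab y j} \<in> EH - edges_between EH (L u) (L w))"
    using assms(5) unfolding natural_bijection_def by blast
  interpret t: thm13 V E m L VH EH u w lab
    by (unfold_locales) (use assms l1 l2 in auto)
  show ?thesis by (rule t.main_loc)
qed


end
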